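(* Let $\mathcal{M}=\mathbb{R}^{d_{\mathbb E}}\times\mathbb{S}^{d_{\mathbb S}}\times\mathbb{H}^{d_{\mathbb H}}$ be a product space form with spherical curvature $C_{\mathbb S}>0$, hyperbolic curvature $C_{\mathbb H}<0$, and fixed positive weights $\alpha_{\mathbb E},\alpha_{\mathbb S},\alpha_{\mathbb H}$. Then the VC dimension of the class of linear classifiers on $\mathcal{M}$ (defined below) is at least $\dim(\mathcal{M})+1=d_{\mathbb E}+d_{\mathbb S}+d_{\mathbb H}+1$.
   Context: Space forms have dimension at least $2$. $\mathbb{S}^{d}=\{x\in\mathbb{R}^{d+1}:\langle x,x\rangle=C_{\mathbb S}^{-1}\}$ with $\langle\cdot,\cdot\rangle$ the dot product; $\mathbb{H}^{d}=\{x\in\mathbb{R}^{d+1}:[x,x]=C_{\mathbb H}^{-1},x_1>0\}$ with $[u,v]=u^\top Hv$, $H=\mathrm{diag}(-1,1,\dots,1)$. A point of $\mathcal{M}$ is written $x=(x_{\mathbb E},x_{\mathbb S},x_{\mathbb H})$. A linear classifier on $\mathcal{M}$ is a map $x\mapsto\mathrm{sgn}\big(\langle w_{\mathbb E},x_{\mathbb E}\rangle+\alpha_{\mathbb S}\,\mathrm{asin}(\langle w_{\mathbb S},x_{\mathbb S}\rangle)+\alpha_{\mathbb H}\,\mathrm{asinh}([w_{\mathbb H},x_{\mathbb H}])+b\big)$ with parameters $w_{\mathbb E}\in\mathbb{R}^{d_{\mathbb E}}$, $\|w_{\mathbb E}\|_2=\alpha_{\mathbb E}$, $w_{\mathbb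 S}\in\mathbb{R}^{d_{\mathbb S}+1}$, $\langle w_{\mathbb S},w_{\mathbb S}\rangle=C_{\mathbb S}$, $w_{\mathbb H}\in\mathbb{R}^{d_{\mathbb H}+1}$, $[w_{\mathbb H},w_{\mathbb H}]=-C_{\mathbb H}$, $b\in\mathbb{R}$. *)

theory Defs
  imports Complex_Main
begin

text \<open>Vectors in R^n are represented as functions nat => real that vanish
  at indices >= n (coordinates 0..n-1).\<close>

definition vzero_beyond :: "nat \<Rightarrow> (nat \<Rightarrow> real) \<Rightarrow> bool" where
  "vzero_beyond n u \<longleftrightarrow> (\<forall>i\<ge>n. u i = 0)"

definition dotp :: "nat \<Rightarrow> (nat \<Rightarrow> real) \<Rightarrow> (nat \<Rightarrow> real) \<Rightarrow> real" where
  "dotp n u v = (\<Sum>i<n. u i * v i)"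

text \<open>Minkowski product [u,v] = u^T H v on R^n, H = diag(-1,1,...,1);
  coordinate 0 is the first (time-like) coordinate x_1 of the paper.\<close>
definition mink :: "nat \<Rightarrow> (nat \<Rightarrow> real) \<Rightarrow> (nat \<Rightarrow> real) \<Rightarrow> real" where
  "mink n u v = - u 0 * v 0 + (\<Sum>i\<in>{1..<n}. u i * v i)"

definition sphere_form :: "nat \<Rightarrow> real \<Rightarrow> (nat \<Rightarrow> real) set" where
  "sphere_form d C = {x. vzero_beyond (d+1) x \<and> dotp (d+1) x x = 1 / C}"

definition hyp_form :: "nat \<Rightarrow> real \<Rightarrow> (nat \<Rightarrow> real) set" where
  "hyp_form d C = {x. vzero_beyond (d+1) x \<and> mink (d+1) x x = 1 / C \<and> x 0 > 0}"

definition prod_space_form ::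
  "nat \<Rightarrow> nat \<Rightarrow> real \<Rightarrow> nat \<Rightarrow> real \<Rightarrow> ((nat \<Rightarrow> real) \<times> (nat \<Rightarrow> real) \<times> (nat \<Rightarrow> real)) set" where
  "prod_space_form dE dS CS dH CH =
     {(xE, xS, xH). vzero_beyond dE xE \<and> xS \<in> sphere_form dS CS \<and> xH \<in> hyp_form dH CH}"

definition linear_classifiers ::
  "nat \<Rightarrow> nat \<Rightarrow> real \<Rightarrow> nat \<Rightarrow> real \<Rightarrow> real \<Rightarrow> real \<Rightarrow> real \<Rightarrow>
   (((nat \<Rightarrow> real) \<times> (nat \<Rightarrow> real) \<times> (nat \<Rightarrow> real)) \<Rightarrow> real) set" where
  "linear_classifiers dE dS CS dH CH aE aS aH =
     {h. \<exists>wE wS wH b.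
           sqrt (dotp dE wE wE) = aE \<and>
           dotp (dS+1) wS wS = CS \<and>
           mink (dH+1) wH wH = - CH \<and>
           h = (\<lambda>(xE, xS, xH). sgn (dotp dE wE xE + aS * arcsin (dotp (dS+1) wS xS)
                                   + aH * arsinh (mink (dH+1) wH xH) + b))}"

definition shatters :: "('a \<Rightarrow> real) set \<Rightarrow> 'a set \<Rightarrow> bool" where
  "shatters H X \<longleftrightarrow>
     (\<forall>y. (\<forall>x\<in>X. y x = 1 \<or> y x = -1) \<longrightarrow> (\<exists>h\<in>H. \<forall>x\<in>X. h x = y x))"

definition vc_dim_at_least :: "('a \<Rightarrow> real) set \<Rightarrow> 'a set \<Rightarrow> nat \<Rightarrow> bool" where
  "vc_dim_at_least H D k \<longleftrightarrow> (\<exists>X\<subseteq>D. finite X \<and> card X = k \<and> shatters H X)"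

end

theory Submission
  imports Defs
begin
lemma dotp_delta: "dotp n u (\<lambda>i. if i = j then c else 0) = (if j < n then u j * c else 0)"
  unfolding dotp_def by (simp add: if_distrib cong: if_cong)
lemma dotp_zero: "dotp n u (\<lambda>_. 0) = 0"
  unfolding dotp_def by simp
lemma mink_h:
  assumes "u 0 = 0"
  shows "mink n u (\<lambda>i. if i = 0 then t else if i = j then a else 0) = (if 1 \<le> j \<and> j < n then u j * a else 0)"
proof -
  have "(\<Sum>i\<in>{1..<n}. u i * (if i = 0 then t else if i = j then a else 0)) = (\<Sum>i\<in>{1..<n}. if i = j then u j * a else 0)"
    by (rule sum.cong) auto
  also have "\<dots> = (if 1 \<le> j \<and> j < n then u j * a else 0)" by simp
  finally show ?thesis unfolding mink_def using assms by simp
qed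
lemma mink_self:
  "mink n (\<lambda>i. if i = 0 then t else if i = j then a else 0) (\<lambda>i. if i = 0 then t else if i = j then a else 0) = - t*t + (if 1 \<le> j \<and> j < n then a * a else 0)"
proof -
  have "(\<Sum>i\<in>{1..<n}. (if i = 0 then t else if i = j then a else 0) * (if i = 0 then t else if i = j then a else 0)) = (\<Sum>i\<in>{1..<n}. if i = j then a * a else 0)"
    by (rule sum.cong) auto
  also have "\<dots> = (if 1 \<le> j \<and> j < n then a * a else 0)" by simp
  finally show ?thesis unfolding mink_def by simp
qed

lemma sum_shift_sq:
  assumes "\<And>i. 1 \<le> i \<Longrightarrow> i \<le> d \<Longrightarrow> z (k + i - 1) * z (k + i - 1) = (1::real)"
  shows "(\<Sum>i<d+1. (if 1 \<le> i \<and> i \<le> d then z (k + i - 1) * r else 0) * (if 1 \<le> i \<and> i \<le> d then z (k + i - 1) * r else 0)) = real d * (r * r)"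
proof -
  have "(\<Sum>i<d+1. (if 1 \<le> i \<and> i \<le> d then z (k + i - 1) * r else 0) * (if 1 \<le> i \<and> i \<le> d then z (k + i - 1) * r else 0))
      = (\<Sum>i<d+1. (if 1 \<le> i \<and> i \<le> d then r * r else 0))"
    apply (rule sum.cong, simp)
    using assms by (auto simp: algebra_simps)
  also have "\<dots> = (\<Sum>i\<in>{1..d}. r * r)"
    by (rule sum.mono_neutral_cong_right) auto
  finally show ?thesis by simp
qed

lemma sgn_lemma:
  fixes z zb K e :: real
  assumes "z = 1 \<or> z = -1" "zb = 1 \<or> zb = -1" "0 < e" "e < K"
  shows "sgn (z * K + zb * e) = z"
  using assms by (auto simp: sgn_if)

lemma sgn_lemma2:
  fixes z e :: real
  assumes "z = 1 \<or> z = -1" "0 < e"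
  shows "sgn (z * e) = z"
  using assms by (auto simp: sgn_if)

theorem theorem2:
  fixes dE dS dH :: nat and CS CH aE aS aH :: real
  assumes "dE \<ge> 2" and "dS \<ge> 2" and "dH \<ge> 2"
    and "CS > 0" and "CH < 0"
    and "aE > 0" and "aS > 0" and "aH > 0"
  shows "vc_dim_at_least (linear_classifiers dE dS CS dH CH aE aS aH)
           (prod_space_form dE dS CS dH CH) (dE + dS + dH + 1)"
proof -
  note A = assms
  define N where "N = dE + dS + dH + 1"
  define rs where "rs = sqrt (1/CS)"
  define a where "a = sqrt (-1/CH)"
  define t where "t = sqrt 2 * a"
  define tt where "tt j = (if j = 0 then a else t)" for j :: nat
  define sS where "sS j = (\<lambda>i::nat. if i = j then rs else (0::real))" for j :: nat
  define hH where "hH j = (\<lambda>i::nat. if i = 0 then tt j else if i = j then a else (0::real))" for j :: nat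
  define eE where "eE k = (\<lambda>i::nat. if i = k then (1::real) else 0)" for k :: nat
  define P where "P n = (if n < dE then (eE n, sS 0, hH 0)
     else if n < dE+dS then ((\<lambda>_. 0), sS (n-dE+1), hH 0)
     else if n < dE+dS+dH then ((\<lambda>_. 0), sS 0, hH (n-dE-dS+1))
     else ((\<lambda>_. 0), sS 0, hH 0))" for n
  define X where "X = P ` {..<N}"
  have rs_pos: "rs > 0" using A unfolding rs_def by simp
  have a_pos: "a > 0" using A unfolding a_def by simp
  have rs2: "rs * rs = 1/CS" using A unfolding rs_def by simp
  have a2: "a * a = -1/CH" using A unfolding a_def by simp
  have t2: "t * t = 2 * (a * a)" unfolding t_def by simp
  have sS_mem: "sS j \<in> sphere_form dS CS" if "j \<le> dS" for j
    using that rs2 unfolding sphere_form_def sS_def vzero_beyond_def by (auto simp: dotp_delta)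
  have hH_mem: "hH j \<in> hyp_form dH CH" if "j \<le> dH" for j
  proof -
    have "mink (dH+1) (hH j) (hH j) = 1 / CH"
      unfolding hH_def mink_self using that a2 t2 A unfolding tt_def by (auto simp: field_simps)
    moreover have "tt j > 0" using a_pos unfolding tt_def t_def by simp
    ultimately show ?thesis using that unfolding hyp_form_def hH_def vzero_beyond_def by auto
  qed
  have sub: "X \<subseteq> prod_space_form dE dS CS dH CH"
    unfolding X_def P_def prod_space_form_def
    using sS_mem hH_mem by (auto simp: eE_def vzero_beyond_def)
  have inj: "inj_on P {..<N}"
  proof (rule inj_onI)
    fix m n assume m: "m \<in> {..<N}" and n: "n \<in> {..<N}" and eq: "P m = P n"
    have E: "fst (P m) = fst (P n)" and S: "fst (snd (P m)) = fst (snd (P n))"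
      and H: "snd (snd (P m)) = snd (snd (P n))" using eq by auto
    have rsnz: "rs \<noteq> 0" and anz: "a \<noteq> 0" using rs_pos a_pos by auto
    show "m = n"
    proof (cases "m < dE")
      case True
      have "fst (P m) m = fst (P n) m" using E by simp
      then show ?thesis using True unfolding P_def eE_def by (auto split: if_splits)
    next
      case c1: False
      show ?thesis
      proof (cases "m < dE + dS")
        case True
        have "fst (snd (P m)) (m-dE+1) = fst (snd (P n)) (m-dE+1)" using S by simp
        moreover have "fst (P m) n = fst (P n) n" using E by simp
        ultimately show ?thesis using True c1 rsnz unfolding P_def eE_def sS_def by (auto split: if_splits)
      next
        case c2: False
        show ?thesis
        proof (cases "m < dE + dS + dH")
          case True
          have "snd (snd (P m)) (m-dE-dS+1) = snd (snd (P n)) (m-dE-dS+1)" using H by simp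
          moreover have "fst (snd (P m)) (n-dE+1) = fst (snd (P n)) (n-dE+1)" using S by simp
          moreover have "fst (P m) n = fst (P n) n" using E by simp
          ultimately show ?thesis using True c1 c2 rsnz anz unfolding P_def eE_def sS_def hH_def
            by (auto split: if_splits)
        next
          case False
          have "snd (snd (P m)) (n-dE-dS+1) = snd (snd (P n)) (n-dE-dS+1)" using H by simp
          moreover have "fst (snd (P m)) (n-dE+1) = fst (snd (P n)) (n-dE+1)" using S by simp
          moreover have "fst (P m) n = fst (P n) n" using E by simp
          ultimately show ?thesis using False m n c1 c2 rsnz anz unfolding P_def eE_def sS_def hH_def N_def
            by (auto split: if_splits)
        qed
      qed
    qed
  qed
  have card: "card X = N" unfolding X_def using card_image[OF inj] by simp
  have shat: "shatters (linear_classifiers dE dS CS dH CH aE aS aH) X"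
    unfolding shatters_def
  proof (intro allI impI)
    fix y :: "_ \<Rightarrow> real" assume y: "\<forall>x\<in>X. y x = 1 \<or> y x = -1"
    define z where "z n = y (P n)" for n
    have z: "z n = 1 \<or> z n = -1" if "n < N" for n
      using y that unfolding z_def X_def by auto
    have zz: "z n * z n = 1" if "n < N" for n using z[OF that] by auto
    define cE where "cE = aE / sqrt dE"
    define rS where "rS = sqrt (CS / dS)"
    define rH where "rH = sqrt (- CH / dH)"
    define kS where "kS = arcsin (sqrt (1 / dS))"
    define kH where "kH = arsinh (sqrt (1 / dH))"
    define e where "e = Min {cE, aS * kS, aH * kH} / 2"
    define wE where "wE i = (if i < dE then z i * cE else 0)" for i
    define wS where "wS i = (if 1 \<le> i \<and> i \<le> dS then z (dE + i - 1) * rS else 0)" for i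
    define wH where "wH i = (if 1 \<le> i \<and> i \<le> dH then z ((dE + dS) + i - 1) * rH else 0)" for i
    define b where "b = z (N - 1) * e"
    define h where "h = (\<lambda>(xE, xS, xH). sgn (dotp dE wE xE + aS * arcsin (dotp (dS+1) wS xS)
                                   + aH * arsinh (mink (dH+1) wH xH) + b))"
    have cE_pos: "cE > 0" unfolding cE_def using A by simp
    have kS_pos: "kS > 0" unfolding kS_def using A
      using arcsin_less_arcsin[of 0 "sqrt (1 / dS)"] by simp
    have kH_pos: "kH > 0" unfolding kH_def using A by simp
    have e_pos: "e > 0" unfolding e_def using cE_pos kS_pos kH_pos A by simp
    have pp: "aS * kS > 0" "aH * kH > 0" using kS_pos kH_pos A by auto
    have eE': "e < cE" "e < aS * kS" "e < aH * kH" unfolding e_def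
      using cE_pos pp by (auto simp: min_def)
    have rSrs: "rS * rs = sqrt (1 / dS)" unfolding rS_def rs_def using A
      by (simp add: real_sqrt_mult[symmetric])
    have rHa: "rH * a = sqrt (1 / dH)" unfolding rH_def a_def using A
      by (simp add: real_sqrt_mult[symmetric] field_simps)
    have hin: "h \<in> linear_classifiers dE dS CS dH CH aE aS aH"
      unfolding linear_classifiers_def
    proof (intro CollectI exI conjI)
      have "dotp dE wE wE = real dE * (cE * cE)"
        unfolding dotp_def wE_def using zz unfolding N_def
        by (simp add: algebra_simps)
      then show "sqrt (dotp dE wE wE) = aE" unfolding cE_def using A
        by (simp add: real_sqrt_mult)
      show "dotp (dS+1) wS wS = CS" unfolding dotp_def wS_def
        apply (subst sum_shift_sq)
        using zz unfolding N_def rS_def using A by auto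
      have "mink (dH+1) wH wH = (\<Sum>i<dH+1. wH i * wH i)"
        unfolding mink_def wH_def by (simp add: lessThan_atLeast0 sum.atLeast_Suc_lessThan)
      also have "\<dots> = - CH" unfolding wH_def
        apply (subst sum_shift_sq)
        using zz unfolding N_def rH_def using A by auto
      finally show "mink (dH+1) wH wH = - CH" .
      show "h = (\<lambda>(xE, xS, xH). sgn (dotp dE wE xE + aS * arcsin (dotp (dS+1) wS xS)
                                   + aH * arsinh (mink (dH+1) wH xH) + b))" unfolding h_def by (rule refl)
    qed
    have val: "h (P n) = z n" if "n < N" for n
    proof -
      have zb: "z (N-1) = 1 \<or> z (N-1) = -1" using z[of "N-1"] unfolding N_def by simp
      have wS0: "dotp (dS+1) wS (sS 0) = 0" unfolding sS_def dotp_delta wS_def by simp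
      have wH0: "mink (dH+1) wH (hH 0) = 0" unfolding hH_def using mink_h[of wH] by (simp add: wH_def)
      show ?thesis
      proof (cases "n < dE")
        case True
        have "dotp dE wE (eE n) = z n * cE" unfolding eE_def dotp_delta wE_def using True by simp
        then have "h (P n) = sgn (z n * cE + z (N-1) * e)"
          unfolding h_def P_def using True wS0 wH0 b_def by simp
        then show ?thesis using sgn_lemma[OF z[OF that] zb e_pos eE'(1)] by simp
      next
        case c1: False
        show ?thesis
        proof (cases "n < dE + dS")
          case True
          have "n - dE < dS" using True c1 by linarith
          have "dotp (dS+1) wS (sS (n-dE+1)) = z n * sqrt (1 / dS)"
            unfolding sS_def dotp_delta wS_def using True c1 rSrs \<open>n - dE < dS\<close> by (simp add: mult.assoc)
          moreover have "arcsin (z n * sqrt (1 / dS)) = z n * kS"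
          proof -
            have "sqrt (1 / dS) \<le> 1" using A by simp
            then have "arcsin (- sqrt (1 / dS)) = - arcsin (sqrt (1 / dS))"
              by (intro arcsin_minus) (auto intro: order_trans[of _ 0])
            then show ?thesis using z[OF that] unfolding kS_def by auto
          qed
          ultimately have "h (P n) = sgn (z n * (aS * kS) + z (N-1) * e)"
            unfolding h_def P_def using True c1 wH0 b_def by (simp add: dotp_zero algebra_simps)
          then show ?thesis using sgn_lemma[OF z[OF that] zb e_pos eE'(2)] by simp
        next
          case c2: False
          show ?thesis
          proof (cases "n < dE + dS + dH")
            case True
            have "n - (dE + dS) < dH" using True c2 by linarith
            have "mink (dH+1) wH (hH (n-dE-dS+1)) = z n * sqrt (1 / dH)"
              unfolding hH_def using mink_h[of wH] True c1 c2 rHa \<open>n - (dE + dS) < dH\<close> by (simp add: wH_def mult.assoc)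
            moreover have "arsinh (z n * sqrt (1 / dH)) = z n * kH"
              using z[OF that] unfolding kH_def by auto
            ultimately have "h (P n) = sgn (z n * (aH * kH) + z (N-1) * e)"
              unfolding h_def P_def using True c1 c2 wS0 b_def by (simp add: dotp_zero algebra_simps)
            then show ?thesis using sgn_lemma[OF z[OF that] zb e_pos eE'(3)] by simp
          next
            case False
            then have nN: "n = N - 1" using that unfolding N_def by simp
            have "h (P n) = sgn (z n * e)"
              unfolding h_def P_def using False c1 c2 wS0 wH0 b_def nN by (simp add: dotp_zero)
            then show ?thesis using sgn_lemma2[OF z[OF that] e_pos] by simp
          qed
        qed
      qed
    qed
    show "\<exists>h\<in>linear_classifiers dE dS CS dH CH aE aS aH. \<forall>x\<in>X. h x = y x"
      using hin val unfolding X_def z_def by auto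
  qed
  show ?thesis unfolding vc_dim_at_least_def
    using sub card shat unfolding X_def N_def by auto
qed
end
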